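(* In a combinatorial auction with a finite set $M$ of heterogeneous items and $n$ bidders whose valuations are additive, there exists a randomized mechanism that is universally obviously strategy-proof and gives a $4$-approximation to the optimal social welfare.
   Context: A valuation $v_i:2^M\to\mathbb{R}_{\ge 0}$ is additive if there are numbers $v_{ij}\ge 0$ ($j\in M$) with $v_i(A)=\sum_{j\in A}v_{ij}$ for all $A\subseteq M$. Each bidder's valuation is private and the domain $V_i$ of possible valuations (here: all additive valuations) is publicly known; utilities are quasi-linear (value of the received bundle minus payment). A feasible allocation assigns disjoint bundles to the bidders. A deterministic mechanism is a rooted tree: each internal node is assigned to one bidder, who at that node sends one of the messages labeling the outgoing edges; each leaf is labeled with a feasible allocation and a payment for each bidder. A behavior $B_i$ of bidder $i$ specifies a message at every node assigned to $i$; a behavior profile $B=(B_1,\dots,B_n)$ determines a root-to-leaf path $\mathrm{Path}(B)$, and $f_i(B),p_i(B)$ denote bidder $i$'s bundle and payment at its leaf. A strategy $\mathcal S_i$ maps each $v_i\in V_i$ to a behavior. $\mathcal S_i$ is obviously dominant if for every $v_i\in V_i$, every node $u$ assigned to $i$, every behaviors $B_{-i}$ of the others and every profile $B'$ such that $u\in\mathrm{Path}(\mathcal S_i(v_i),B_{-i})\cap\mathrm{Path}(B')$ and $B'_i$ sends at $u$ a message different from that of $\mathcal S_i(v_i)$, we have $v_i(f_i(\mathcal S_i(v_i),B_{-i}))-p_i(\mathcal S_i(v_i),B_{-i})\ge v_i(f_i(B'))-p_i(B')$. A deterministic mechanism with strategies is obviously strategy-proof (OSP) if all its strategies are obviously dominant.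 A randomized mechanism is a probability distribution over deterministic mechanisms, each equipped with strategies; it is universally OSP if every deterministic mechanism in its support is OSP. For a valuation profile $v$, its welfare $\mathbb{E}[W(v)]$ is the expected (over the random draw) total value of the allocation reached when all bidders follow their strategies; it gives an $\alpha$-approximation if $\mathrm{OPT}(v)\le\alpha\,\mathbb{E}[W(v)]$ for every profile $v$, where $\mathrm{OPT}(v)$ is the maximum of $\sum_i v_i(T_i)$ over feasible allocations $(T_1,\dots,T_n)$. *)

theory Defs
  imports "HOL-Probability.Probability_Measure" "HOL-Library.Sublist"
begin

text \<open>Bidders are 0,...,n-1; items form a finite set M of type 'm.
  Messages are real numbers (at most continuum many messages are ever useful,
  since strategies map the continuum of valuations to behaviours).
  A deterministic mechanism is a well-founded (possibly infinitely branching) tree: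
  a leaf carries an allocation and payments; an internal node carries the bidder
  it is assigned to, the set of messages labelling its outgoing edges, and the
  subtree reached by each message.\<close>

datatype 'm mtree =
    Leaf "nat \<Rightarrow> 'm set" "nat \<Rightarrow> real"
  | Node nat "real set" "real \<Rightarrow> 'm mtree"

definition feasible_alloc :: "nat \<Rightarrow> 'm set \<Rightarrow> (nat \<Rightarrow> 'm set) \<Rightarrow> bool" where
  "feasible_alloc n M T \<longleftrightarrow>
     (\<forall>i<n. T i \<subseteq> M) \<and> (\<forall>i<n. \<forall>j<n. i \<noteq> j \<longrightarrow> T i \<inter> T j = {})"

definition additive_vals :: "'m set \<Rightarrow> ('m \<Rightarrow> real) set" where
  "additive_vals M = {v. (\<forall>j\<in>M. 0 \<le> v j) \<and> (\<forall>j. j \<notin> M \<longrightarrow> v j = 0)}"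

inductive wf_tree :: "nat \<Rightarrow> 'm set \<Rightarrow> 'm mtree \<Rightarrow> bool" for n M where
  wf_leaf: "feasible_alloc n M a \<Longrightarrow> wf_tree n M (Leaf a p)"
| wf_node: "i < n \<Longrightarrow> S \<noteq> {} \<Longrightarrow> (\<forall>m\<in>S. wf_tree n M (ch m)) \<Longrightarrow> wf_tree n M (Node i S ch)"

text \<open>Nodes are identified by their position: the list of messages from the root.
  at_pos T h u: the subtree of T at position h is u.\<close>
inductive at_pos :: "'m mtree \<Rightarrow> real list \<Rightarrow> 'm mtree \<Rightarrow> bool" where
  pos_root: "at_pos t [] t"
| pos_step: "m \<in> S \<Longrightarrow> at_pos (ch m) h u \<Longrightarrow> at_pos (Node i S ch) (m # h) u"

type_synonym behavior = "real list \<Rightarrow> real"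

definition valid_beh :: "'m mtree \<Rightarrow> nat \<Rightarrow> behavior \<Rightarrow> bool" where
  "valid_beh T i b \<longleftrightarrow> (\<forall>h S ch. at_pos T (h) (Node i S ch) \<longrightarrow> b h \<in> S)"

definition valid_profile :: "nat \<Rightarrow> 'm mtree \<Rightarrow> (nat \<Rightarrow> behavior) \<Rightarrow> bool" where
  "valid_profile n T B \<longleftrightarrow> (\<forall>j<n. valid_beh T j (B j))"

primrec play :: "'m mtree \<Rightarrow> (nat \<Rightarrow> behavior) \<Rightarrow> real list
                  \<Rightarrow> real list \<times> (nat \<Rightarrow> 'm set) \<times> (nat \<Rightarrow> real)" where
  "play (Leaf a p) B h = (h, a, p)"
| "play (Node i S ch) B h = play (ch (B i h)) B (h @ [B i h])"

definition path_of :: "'m mtree \<Rightarrow> (nat \<Rightarrow> behavior) \<Rightarrow> real list" where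
  "path_of T B = fst (play T B [])"

definition alloc_of :: "'m mtree \<Rightarrow> (nat \<Rightarrow> behavior) \<Rightarrow> nat \<Rightarrow> 'm set" where
  "alloc_of T B = fst (snd (play T B []))"

definition pay_of :: "'m mtree \<Rightarrow> (nat \<Rightarrow> behavior) \<Rightarrow> nat \<Rightarrow> real" where
  "pay_of T B = snd (snd (play T B []))"

definition utility :: "('m \<Rightarrow> real) \<Rightarrow> 'm mtree \<Rightarrow> (nat \<Rightarrow> behavior) \<Rightarrow> nat \<Rightarrow> real" where
  "utility v T B i = sum v (alloc_of T B i) - pay_of T B i"

type_synonym 'm strategies = "nat \<Rightarrow> ('m \<Rightarrow> real) \<Rightarrow> behavior"

definition obviously_dominant ::
    "nat \<Rightarrow> 'm set \<Rightarrow> 'm mtree \<Rightarrow> nat \<Rightarrow> (('m \<Rightarrow> real) \<Rightarrow> behavior) \<Rightarrow> bool" where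
  "obviously_dominant n M T i Si \<longleftrightarrow>
     (\<forall>v\<in>additive_vals M. \<forall>h S ch Bo B'.
        at_pos T h (Node i S ch) \<longrightarrow>
        (\<forall>j<n. j \<noteq> i \<longrightarrow> valid_beh T j (Bo j)) \<longrightarrow>
        valid_profile n T B' \<longrightarrow>
        prefix h (path_of T (Bo(i := Si v))) \<longrightarrow>
        prefix h (path_of T B') \<longrightarrow>
        B' i h \<noteq> Si v h \<longrightarrow>
        utility v T B' i \<le> utility v T (Bo(i := Si v)) i)"

definition osp :: "nat \<Rightarrow> 'm set \<Rightarrow> 'm mtree \<Rightarrow> 'm strategies \<Rightarrow> bool" where
  "osp n M T S \<longleftrightarrow> wf_tree n M T \<and>
     (\<forall>i<n. \<forall>v\<in>additive_vals M. valid_beh T i (S i v)) \<and>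
     (\<forall>i<n. obviously_dominant n M T i (S i))"

definition welfare :: "nat \<Rightarrow> 'm mtree \<Rightarrow> 'm strategies \<Rightarrow> (nat \<Rightarrow> 'm \<Rightarrow> real) \<Rightarrow> real" where
  "welfare n T S v = (\<Sum>i<n. sum (v i) (alloc_of T (\<lambda>i. S i (v i)) i))"

definition OPT :: "nat \<Rightarrow> 'm set \<Rightarrow> (nat \<Rightarrow> 'm \<Rightarrow> real) \<Rightarrow> real" where
  "OPT n M v = Sup {(\<Sum>i<n. sum (v i) (T i)) | T. feasible_alloc n M T}"

end

theory Submission
  imports Defs
begin

fun mk :: "(nat \<Rightarrow> nat) \<Rightarrow> (real list \<Rightarrow> nat \<Rightarrow> 'm set) \<Rightarrow> (real list \<Rightarrow> nat \<Rightarrow> real)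
   \<Rightarrow> nat \<Rightarrow> real list \<Rightarrow> 'm mtree" where
  "mk own A P 0 h = Leaf (A h) (P h)"
| "mk own A P (Suc k) h = Node (own (length h)) UNIV (\<lambda>x. mk own A P k (h @ [x]))"

fun run :: "(nat \<Rightarrow> nat) \<Rightarrow> (nat \<Rightarrow> behavior) \<Rightarrow> nat \<Rightarrow> real list \<Rightarrow> real list" where
  "run own B 0 h = h"
| "run own B (Suc k) h = run own B k (h @ [B (own (length h)) h])"

lemma play_mk: "play (mk own A P k h) B h = (run own B k h, A (run own B k h), P (run own B k h))"
  by (induction k arbitrary: h) auto
lemma run_len: "length (run own B k h) = length h + k"
  by (induction k arbitrary: h) auto

lemma run_app: "\<exists>ys. run own B k h = h @ ys"
proof (induction k arbitrary: h)
  case 0 then show ?case by simp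
next
  case (Suc k)
  obtain ys where "run own B k (h @ [B (own (length h)) h]) = (h @ [B (own (length h)) h]) @ ys"
    using Suc by blast
  then show ?case by auto
qed

lemma run_take: "take (length h) (run own B k h) = h"
  using run_app[of own B k h] by auto

lemma run_nth: "length h \<le> d \<Longrightarrow> d < length h + k \<Longrightarrow> run own B k h ! d = B (own d) (take d (run own B k h))"
proof (induction k arbitrary: h)
  case 0 then show ?case by simp
next
  case (Suc k)
  let ?h = "h @ [B (own (length h)) h]"
  show ?case
  proof (cases "d = length h")
    case True
    have t: "take (Suc (length h)) (run own B k ?h) = ?h" using run_take[where h="?h" and own=own and B=B and k=k] by simp
    have "run own B k ?h ! d = take (Suc (length h)) (run own B k ?h) ! length h"
      using True by simp
    then have "run own B k ?h ! d = ?h ! length h" by (simp only: t)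
    moreover have "take d (run own B k ?h) = take (length h) (take (Suc (length h)) (run own B k ?h))"
      using True by simp
    then have "take d (run own B k ?h) = h" by (simp only: t) simp
    ultimately show ?thesis using True by simp
  next
    case False
    then show ?thesis using Suc by simp
  qed
qed

lemma at_pos_mk: "at_pos T h u \<Longrightarrow> T = mk own A P k h0 \<Longrightarrow>
   length h \<le> k \<and> u = mk own A P (k - length h) (h0 @ h)"
proof (induction arbitrary: k h0 rule: at_pos.induct)
  case (pos_root t) then show ?case by simp
next
  case (pos_step m S ch h u i)
  then obtain k' where k: "k = Suc k'" by (cases k) auto
  with pos_step.prems have "ch m = mk own A P k' (h0 @ [m])" by auto
  from pos_step.IH[OF this] k show ?case by auto
qed

lemma at_pos_mk_node: "at_pos (mk own A P k []) h (Node i S ch) \<Longrightarrow> length h < k \<and> i = own (length h)"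
proof -
  assume a: "at_pos (mk own A P k []) h (Node i S ch)"
  from at_pos_mk[OF a refl] have *: "length h \<le> k" "Node i S ch = mk own A P (k - length h) h" by auto
  show ?thesis
  proof (cases "k - length h")
    case 0 then show ?thesis using * by simp
  next
    case (Suc k') then show ?thesis using * by simp
  qed
qed

lemma valid_beh_mk: "valid_beh (mk own A P k []) i b"
  unfolding valid_beh_def
proof (intro allI impI)
  fix h S ch assume a: "at_pos (mk own A P k []) h (Node i S ch)"
  from at_pos_mk[OF a refl] have *: "Node i S ch = mk own A P (k - length h) h" by auto
  show "b h \<in> S"
  proof (cases "k - length h")
    case 0 then show ?thesis using * by simp
  next
    case (Suc k') then show ?thesis using * by simp
  qed
qed

lemma wf_mk: "(\<And>H. feasible_alloc n M (A H)) \<Longrightarrow> (\<And>d. d < length h + k \<Longrightarrow> own d < n) \<Longrightarrow> wf_tree n M (mk own A P k h)"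
proof (induction k arbitrary: h)
  case 0 then show ?case by (simp add: wf_leaf)
next
  case (Suc k)
  have "own (length h) < n" using Suc.prems(2)[of "length h"] by simp
  moreover have "wf_tree n M (mk own A P k (h @ [x]))" for x
    by (rule Suc.IH) (use Suc.prems in auto)
  ultimately show ?case by (simp add: wf_node)
qed

lemma path_mk: "path_of (mk own A P k []) B = run own B k []"
  by (simp add: path_of_def play_mk[of own A P k "[]" B, simplified])
lemma alloc_mk: "alloc_of (mk own A P k []) B = A (run own B k [])"
  by (simp add: alloc_of_def play_mk[of own A P k "[]" B, simplified])
lemma pay_mk: "pay_of (mk own A P k []) B = P (run own B k [])"
  by (simp add: pay_of_def play_mk[of own A P k "[]" B, simplified])


definition lexl :: "real \<times> int \<Rightarrow> real \<times> int \<Rightarrow> bool" where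
  "lexl p q \<longleftrightarrow> fst p < fst q \<or> (fst p = fst q \<and> snd p < snd q)"

definition lmax :: "real \<times> int \<Rightarrow> real \<times> int \<Rightarrow> real \<times> int" where
  "lmax p q = (if lexl q p then p else q)"

definition pk :: "nat \<Rightarrow> nat list \<Rightarrow> nat \<Rightarrow> real list \<Rightarrow> nat \<Rightarrow> real \<times> int" where
  "pk n rs m H j = fold lmax (map (\<lambda>ri. (H ! (ri * m + j), - int (rs ! ri))) [0..<length rs]) (0, - int n)"

definition own :: "nat list \<Rightarrow> nat list \<Rightarrow> nat \<Rightarrow> nat \<Rightarrow> nat" where
  "own rs bs m d = (if d < length rs * m then rs ! (d div m) else bs ! ((d - length rs * m) div m))"

definition wins :: "nat list \<Rightarrow> nat \<Rightarrow> real list \<Rightarrow> nat \<Rightarrow> nat \<Rightarrow> bool" where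
  "wins rs m H bi j \<longleftrightarrow> H ! (length rs * m + bi * m + j) = 1 \<and>
      (\<forall>bi'<bi. H ! (length rs * m + bi' * m + j) \<noteq> 1)"

definition winner :: "nat list \<Rightarrow> nat list \<Rightarrow> nat \<Rightarrow> real list \<Rightarrow> nat \<Rightarrow> nat \<Rightarrow> bool" where
  "winner rs bs m H i j \<longleftrightarrow> (\<exists>bi<length bs. bs ! bi = i \<and> wins rs m H bi j)"

definition Al :: "'m list \<Rightarrow> nat list \<Rightarrow> nat list \<Rightarrow> real list \<Rightarrow> nat \<Rightarrow> 'm set" where
  "Al xs rs bs H i = (\<lambda>j. xs ! j) ` {j. j < length xs \<and> winner rs bs (length xs) H i j}"

definition Pa :: "nat \<Rightarrow> 'm list \<Rightarrow> nat list \<Rightarrow> nat list \<Rightarrow> real list \<Rightarrow> nat \<Rightarrow> real" where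
  "Pa n xs rs bs H i = (\<Sum>j<length xs. if winner rs bs (length xs) H i j then fst (pk n rs (length xs) H j) else 0)"

definition St :: "nat \<Rightarrow> 'm list \<Rightarrow> nat list \<Rightarrow> nat \<Rightarrow> ('m \<Rightarrow> real) \<Rightarrow> real list \<Rightarrow> real" where
  "St n xs rs i val h = (if length h < length rs * length xs then val (xs ! (length h mod length xs))
     else if lexl (pk n rs (length xs) h (length h mod length xs)) (val (xs ! (length h mod length xs)), - int i)
          then 1 else 0)"

definition Tr :: "nat \<Rightarrow> 'm list \<Rightarrow> nat list \<Rightarrow> nat list \<Rightarrow> 'm mtree" where
  "Tr n xs rs bs = mk (own rs bs (length xs)) (Al xs rs bs) (Pa n xs rs bs)
      (length rs * length xs + length bs * length xs) []"

lemma pk_cong: "(\<And>d. d < length rs * m \<Longrightarrow> H ! d = H' ! d) \<Longrightarrow> j < m \<Longrightarrow> pk n rs m H j = pk n rs m H' j"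
proof -
  assume a: "\<And>d. d < length rs * m \<Longrightarrow> H ! d = H' ! d" and j: "j < m"
  have "ri * m + j < length rs * m" if "ri < length rs" for ri
  proof -
    have "ri * m + j < ri * m + m" using j by simp
    also have "\<dots> = Suc ri * m" by simp
    also have "\<dots> \<le> length rs * m" using that by (intro mult_le_mono1) simp
    finally show ?thesis .
  qed
  then show ?thesis unfolding pk_def using a by (intro arg_cong2[where f = "fold lmax"] refl map_cong) auto
qed

lemma own_buyer: "j < m \<Longrightarrow> own rs bs m (length rs * m + bi * m + j) = bs ! bi"
  by (simp add: own_def)

lemma winner_iff: "distinct bs \<Longrightarrow> bi < length bs \<Longrightarrow> winner rs bs m H (bs ! bi) j \<longleftrightarrow> wins rs m H bi j"
  unfolding winner_def by (auto simp: nth_eq_iff_index_eq)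

lemma util_eq:
  assumes "distinct xs"
  shows "sum v (Al xs rs bs H i) - Pa n xs rs bs H i =
    (\<Sum>j<length xs. if winner rs bs (length xs) H i j then v (xs ! j) - fst (pk n rs (length xs) H j) else 0)"
proof -
  have inj: "inj_on (\<lambda>j. xs ! j) {j. j < length xs \<and> winner rs bs (length xs) H i j}"
    using assms by (auto simp: inj_on_def nth_eq_iff_index_eq)
  have "sum v (Al xs rs bs H i) = (\<Sum>j\<in>{j. j < length xs \<and> winner rs bs (length xs) H i j}. v (xs ! j))"
    unfolding Al_def by (subst sum.reindex[OF inj]) simp
  also have "\<dots> = (\<Sum>j<length xs. if winner rs bs (length xs) H i j then v (xs ! j) else 0)"
    by (subst sum.inter_filter[symmetric]) (auto intro: sum.cong simp: lessThan_def)
  finally show ?thesis unfolding Pa_def by (simp add: sum_subtractf[symmetric] if_distrib cong: if_cong)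
qed


lemma wins_unique: "wins rs m H bi j \<Longrightarrow> wins rs m H bi' j \<Longrightarrow> bi = bi'"
  unfolding wins_def by (metis linorder_neqE_nat)

lemma feasible_Al:
  assumes "distinct xs" "set xs = M" "distinct bs"
  shows "feasible_alloc n M (Al xs rs bs H)"
  unfolding feasible_alloc_def
proof (intro conjI allI impI)
  fix i assume "i < n" then show "Al xs rs bs H i \<subseteq> M" using assms unfolding Al_def by auto
next
  fix i i' assume "i < n" "i' < n" "i \<noteq> i'"
  show "Al xs rs bs H i \<inter> Al xs rs bs H i' = {}"
  proof (rule ccontr)
    assume "Al xs rs bs H i \<inter> Al xs rs bs H i' \<noteq> {}"
    then obtain j j' where jj: "j < length xs" "j' < length xs" "xs ! j = xs ! j'"
       "winner rs bs (length xs) H i j" "winner rs bs (length xs) H i' j'"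
      unfolding Al_def by auto
    then have "j = j'" using assms(1) by (simp add: nth_eq_iff_index_eq)
    with jj obtain bi bi' where "bs ! bi = i" "bs ! bi' = i'" "wins rs (length xs) H bi j" "wins rs (length xs) H bi' j"
      unfolding winner_def by auto
    with wins_unique \<open>i \<noteq> i'\<close> show False by blast
  qed
qed

lemma own_lt:
  assumes "set rs \<subseteq> {..<n}" "set bs \<subseteq> {..<n}" "d < length rs * m + length bs * m"
  shows "own rs bs m d < n"
proof (cases "d < length rs * m")
  case True
  then have "d div m < length rs" by (simp add: less_mult_imp_div_less)
  then have "rs ! (d div m) \<in> set rs" by (rule nth_mem)
  then show ?thesis using True assms(1) unfolding own_def by auto
next
  case False
  then have "d - length rs * m < length bs * m" using assms(3) by simp
  then have "(d - length rs * m) div m < length bs" by (simp add: less_mult_imp_div_less)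
  then have "bs ! ((d - length rs * m) div m) \<in> set bs" by (rule nth_mem)
  then show ?thesis using False assms(2) unfolding own_def by auto
qed


lemma prefix_nth: "prefix h H \<Longrightarrow> d < length h \<Longrightarrow> H ! d = h ! d"
  by (auto simp: prefix_def nth_append)

lemma od_Tr:
  assumes dxs: "distinct xs" and sxs: "set xs = M" and dbs: "distinct bs"
    and disj: "set rs \<inter> set bs = {}"
  shows "obviously_dominant n M (Tr n xs rs bs) i (St n xs rs i)"
  unfolding obviously_dominant_def
proof (intro ballI allI impI)
  fix v h S ch Bo B'
  assume at: "at_pos (Tr n xs rs bs) h (Node i S ch)"
    and p1: "prefix h (path_of (Tr n xs rs bs) (Bo(i := St n xs rs i v)))"
    and p2: "prefix h (path_of (Tr n xs rs bs) B')"
  define m where "m = length xs"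
  define K where "K = length rs * m"
  define N where "N = K + length bs * m"
  define ow where "ow = own rs bs m"
  define Bt where "Bt = Bo(i := St n xs rs i v)"
  define H where "H = run ow Bt N []"
  define H' where "H' = run ow B' N []"
  define L where "L = length h"
  have T: "Tr n xs rs bs = mk ow (Al xs rs bs) (Pa n xs rs bs) N []"
    unfolding Tr_def ow_def N_def K_def m_def by simp
  from at_pos_mk_node[OF at[unfolded T]] have LN: "L < N" and iL: "i = ow L" unfolding L_def by auto
  have pH: "prefix h H" using p1 unfolding T path_mk H_def Bt_def .
  have pH': "prefix h H'" using p2 unfolding T path_mk H'_def .
  have agree: "H ! d = H' ! d" if "d < L" for d
    using prefix_nth[OF pH] prefix_nth[OF pH'] that unfolding L_def by simp
  have lenH: "length H = N" unfolding H_def by (simp add: run_len)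
  define f where "f X j = (if winner rs bs m X i j then v (xs ! j) - fst (pk n rs m X j) else 0)" for X j
  have uH: "utility v (Tr n xs rs bs) Bt i = (\<Sum>j<m. f H j)"
    unfolding utility_def T alloc_mk pay_mk H_def[symmetric] f_def m_def
    using util_eq[OF dxs] unfolding N_def K_def m_def by simp
  have uH': "utility v (Tr n xs rs bs) B' i = (\<Sum>j<m. f H' j)"
    unfolding utility_def T alloc_mk pay_mk H'_def[symmetric] f_def m_def
    using util_eq[OF dxs] unfolding N_def K_def m_def by simp
  show "utility v (Tr n xs rs bs) B' i \<le> utility v (Tr n xs rs bs) (Bo(i := St n xs rs i v)) i"
    unfolding Bt_def[symmetric] uH uH'
  proof (cases "i \<in> set bs")
    case False
    then have "\<not> winner rs bs m X i j" for X j unfolding winner_def by auto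
    then show "(\<Sum>j<m. f H' j) \<le> (\<Sum>j<m. f H j)" unfolding f_def by simp
  next
    case True
    have KL: "K \<le> L"
    proof (rule ccontr)
      assume "\<not> K \<le> L"
      then have "L < length rs * m" unfolding K_def by simp
      moreover then have "L div m < length rs" by (simp add: less_mult_imp_div_less)
      ultimately have "i \<in> set rs" using iL unfolding ow_def own_def by auto
      with True disj show False by auto
    qed
    have m0: "0 < m" using KL LN unfolding N_def by (cases m) auto
    define bi where "bi = (L - K) div m"
    define j0 where "j0 = (L - K) mod m"
    have Ldec: "L = K + bi * m + j0" unfolding bi_def j0_def using KL by simp
    have j0m: "j0 < m" unfolding j0_def using m0 by simp
    have bil: "bi < length bs" unfolding bi_def using KL LN unfolding N_def
      by (simp add: less_mult_imp_div_less)
    have ibi: "bs ! bi = i" using iL KL unfolding ow_def own_def bi_def K_def by simp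
    have pos_lt: "bi' * m + j < bi * m" if "bi' < bi" "j < m" for bi' j
    proof -
      have "bi' * m + j < bi' * m + m" using that by simp
      also have "\<dots> = Suc bi' * m" by simp
      also have "\<dots> \<le> bi * m" using that by (intro mult_le_mono1) simp
      finally show ?thesis .
    qed
    show "(\<Sum>j<m. f H' j) \<le> (\<Sum>j<m. f H j)"
    proof (rule sum_mono)
      fix j assume "j \<in> {..<m}"
      then have jm: "j < m" by simp
      have pkeq: "pk n rs m H' j = pk n rs m H j"
        by (rule pk_cong[OF _ jm]) (use agree KL in \<open>auto simp: K_def\<close>)
      have Eeq: "(\<forall>bi'<bi. H' ! (K + bi' * m + j) \<noteq> 1) = (\<forall>bi'<bi. H ! (K + bi' * m + j) \<noteq> 1)"
        using agree pos_lt[OF _ jm] Ldec by (metis add_less_cancel_left le_add1 order_less_le_trans add.assoc)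
      have wf: "winner rs bs m X i j \<longleftrightarrow> X ! (K + bi * m + j) = 1 \<and> (\<forall>bi'<bi. X ! (K + bi' * m + j) \<noteq> 1)" for X
        using winner_iff[OF dbs bil, of rs m X j] ibi unfolding wins_def K_def by simp
      show "f H' j \<le> f H j"
      proof (cases "j < j0")
        case True
        then have "H' ! (K + bi * m + j) = H ! (K + bi * m + j)" using agree Ldec by simp
        then show ?thesis unfolding f_def wf pkeq Eeq by simp
      next
        case False
        define d where "d = K + bi * m + j"
        have Ld: "L \<le> d" using False Ldec unfolding d_def by simp
        have dN: "d < N"
        proof -
          have "bi * m + j < Suc bi * m" using jm by simp
          also have "\<dots> \<le> length bs * m" using bil by (intro mult_le_mono1) simp
          finally show ?thesis unfolding d_def N_def by simp
        qed
        have owd: "ow d = i" unfolding ow_def d_def K_def using own_buyer[OF jm] ibi by simp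
        have Hd: "H ! d = St n xs rs i v (take d H)"
          using run_nth[of "[]" d N ow Bt] dN owd unfolding H_def[symmetric] by (simp add: Bt_def)
        have ltd: "length (take d H) = d" using lenH dN by simp
        have "d = j + (length rs + bi) * m" unfolding d_def K_def by (simp add: algebra_simps)
        then have dmod: "d mod m = j" using jm by simp
        have pkt: "pk n rs m (take d H) j = pk n rs m H j"
          by (rule pk_cong[OF _ jm]) (use KL Ld in \<open>auto simp: K_def\<close>)
        have Hd2: "H ! d = (if lexl (pk n rs m H j) (v (xs ! j), - int i) then 1 else 0)"
          unfolding Hd St_def ltd m_def[symmetric] K_def[symmetric] dmod pkt using KL Ld by simp
        show ?thesis
        proof (cases "lexl (pk n rs m H j) (v (xs ! j), - int i)")
          case True
          then have "fst (pk n rs m H j) \<le> v (xs ! j)" unfolding lexl_def by auto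
          then show ?thesis unfolding f_def wf pkeq Eeq d_def[symmetric] Hd2 using True by auto
        next
          case False
          then have "v (xs ! j) \<le> fst (pk n rs m H j)" unfolding lexl_def by auto
          then show ?thesis unfolding f_def wf pkeq Eeq d_def[symmetric] Hd2 using False by auto
        qed
      qed
    qed
  qed
qed


lemma osp_Tr:
  assumes dxs: "distinct xs" and sxs: "set xs = M" and dbs: "distinct bs"
    and disj: "set rs \<inter> set bs = {}" and rsn: "set rs \<subseteq> {..<n}" and bsn: "set bs \<subseteq> {..<n}"
  shows "osp n M (Tr n xs rs bs) (\<lambda>i. St n xs rs i)"
  unfolding osp_def
proof (intro conjI allI impI ballI)
  show "wf_tree n M (Tr n xs rs bs)" unfolding Tr_def
    by (rule wf_mk) (use feasible_Al[OF dxs sxs dbs] own_lt[OF rsn bsn] in auto)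
next
  fix i v show "valid_beh (Tr n xs rs bs) i (St n xs rs i v)" unfolding Tr_def by (rule valid_beh_mk)
next
  fix i show "obviously_dominant n M (Tr n xs rs bs) i (St n xs rs i)" by (rule od_Tr[OF assms(1-4)])
qed

lemma lexl_trans: "lexl a b \<Longrightarrow> lexl b c \<Longrightarrow> lexl a c" unfolding lexl_def by auto
lemma lexl_total: "a \<noteq> b \<Longrightarrow> lexl a b \<or> lexl b a" unfolding lexl_def by (auto simp: prod_eq_iff)
lemma lexl_irrefl: "\<not> lexl a a" unfolding lexl_def by auto
lemma lexl_asym: "lexl a b \<Longrightarrow> \<not> lexl b a" unfolding lexl_def by auto
lemma lexl_le_trans: "lexl a b \<Longrightarrow> \<not> lexl c b \<Longrightarrow> lexl a c"
  unfolding lexl_def by auto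

lemma fold_lmax: "fold lmax xs a \<in> insert a (set xs) \<and> (\<forall>y\<in>insert a (set xs). \<not> lexl (fold lmax xs a) y)"
proof (induction xs arbitrary: a)
  case Nil then show ?case by (simp add: lexl_irrefl)
next
  case (Cons x xs)
  from Cons[of "lmax x a"] show ?case
    unfolding lmax_def by (auto split: if_splits dest: lexl_le_trans lexl_asym simp: lexl_irrefl)
qed

lemma exists_max:
  fixes A :: "nat set" and key :: "nat \<Rightarrow> real \<times> int"
  assumes "finite A" "A \<noteq> {}"
  shows "\<exists>t\<in>A. \<forall>i\<in>A. \<not> lexl (key t) (key i)"
  using assms
proof (induction A rule: finite_ne_induct)
  case (singleton x) then show ?case by (simp add: lexl_irrefl)
next
  case (insert x F)
  then obtain t where t: "t \<in> F" "\<forall>i\<in>F. \<not> lexl (key t) (key i)" by blast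
  show ?case
  proof (cases "lexl (key t) (key x)")
    case True
    then show ?thesis using t by (auto intro!: bexI[of _ x] simp: lexl_irrefl dest: lexl_le_trans lexl_asym)
  next
    case False
    then show ?thesis using t by auto
  qed
qed


definition kf :: "(nat \<Rightarrow> 'm \<Rightarrow> real) \<Rightarrow> 'm list \<Rightarrow> nat \<Rightarrow> nat \<Rightarrow> real \<times> int" where
  "kf v xs j i = (v i (xs ! j), - int i)"

lemma mod_lem: "j < (m::nat) \<Longrightarrow> (a * m + j) mod m = j"
  by simp

lemma truth_report:
  assumes "ri < length rs" "j < length xs"
  shows "run (own rs bs (length xs)) (\<lambda>i. St n xs rs i (v i)) (length rs * length xs + length bs * length xs) [] ! (ri * length xs + j)
    = v (rs ! ri) (xs ! j)"
proof -
  define m where "m = length xs"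
  define H where "H = run (own rs bs m) (\<lambda>i. St n xs rs i (v i)) (length rs * m + length bs * m) []"
  define d where "d = ri * m + j"
  have dK: "d < length rs * m"
  proof -
    have "ri * m + j < Suc ri * m" using assms m_def by simp
    also have "\<dots> \<le> length rs * m" using assms by (intro mult_le_mono1) simp
    finally show ?thesis unfolding d_def .
  qed
  have "H ! d = St n xs rs (own rs bs m d) (v (own rs bs m d)) (take d H)"
    unfolding H_def using run_nth[of "[]" d] dK by simp
  moreover have "length (take d H) = d" unfolding H_def using dK by (simp add: run_len)
  moreover have "d mod m = j" unfolding d_def using assms m_def by (auto simp: mod_lem)
  moreover have "d div m = ri"
  proof -
    have "0 < m" unfolding m_def using assms(2) by linarith
    then show ?thesis unfolding d_def using assms(2) m_def by simp
  qed
  ultimately show ?thesis using dK unfolding H_def d_def m_def St_def own_def by simp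
qed

lemma truth_pk:
  assumes "j < length xs"
  shows "pk n rs (length xs) (run (own rs bs (length xs)) (\<lambda>i. St n xs rs i (v i)) (length rs * length xs + length bs * length xs) []) j
    = fold lmax (map (kf v xs j) rs) (0, - int n)"
  unfolding pk_def using truth_report[OF _ assms]
  by (intro arg_cong2[where f = "fold lmax"] refl) (auto simp: kf_def intro!: nth_equalityI)

lemma truth_buyer:
  assumes "bi < length bs" "j < length xs"
  shows "run (own rs bs (length xs)) (\<lambda>i. St n xs rs i (v i)) (length rs * length xs + length bs * length xs) []
       ! (length rs * length xs + bi * length xs + j)
    = (if lexl (fold lmax (map (kf v xs j) rs) (0, - int n)) (kf v xs j (bs ! bi)) then 1 else 0)"
proof -
  define m where "m = length xs"
  define K where "K = length rs * m"
  define H where "H = run (own rs bs m) (\<lambda>i. St n xs rs i (v i)) (K + length bs * m) []"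
  define d where "d = K + bi * m + j"
  have dN: "d < K + length bs * m"
  proof -
    have "bi * m + j < Suc bi * m" using assms m_def by simp
    also have "\<dots> \<le> length bs * m" using assms by (intro mult_le_mono1) simp
    finally show ?thesis unfolding d_def by simp
  qed
  have owd: "own rs bs m d = bs ! bi" unfolding d_def K_def using own_buyer assms m_def by simp
  have "H ! d = St n xs rs (bs ! bi) (v (bs ! bi)) (take d H)"
    unfolding H_def using run_nth[of "[]" d] dN owd by simp
  moreover have "length (take d H) = d" unfolding H_def using dN by (simp add: run_len)
  moreover have "d = (length rs + bi) * m + j" unfolding d_def K_def by (simp add: algebra_simps)
  then have "d mod m = j" using assms m_def by (simp add: mod_lem)
  moreover have "pk n rs m (take d H) j = pk n rs m H j"
    by (rule pk_cong) (use assms m_def in \<open>auto simp: d_def K_def\<close>)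
  moreover have "pk n rs m H j = fold lmax (map (kf v xs j) rs) (0, - int n)"
    unfolding H_def K_def m_def by (rule truth_pk[OF assms(2)])
  ultimately show ?thesis unfolding H_def[symmetric] d_def[symmetric] K_def[symmetric] m_def[symmetric]
    unfolding St_def kf_def m_def[symmetric] K_def[symmetric] by (simp add: d_def)
qed


lemma win_event:
  assumes dbs: "distinct bs" and jm: "j < length xs" and tb: "t \<in> set bs"
    and hb: "\<forall>b\<in>set bs. b \<noteq> t \<longrightarrow> lexl (kf v xs j b) (fold lmax (map (kf v xs j) rs) (0, - int n))"
    and ht: "lexl (fold lmax (map (kf v xs j) rs) (0, - int n)) (kf v xs j t)"
  shows "winner rs bs (length xs) (run (own rs bs (length xs)) (\<lambda>i. St n xs rs i (v i)) (length rs * length xs + length bs * length xs) []) t j"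
proof -
  obtain bt where bt: "bt < length bs" "bs ! bt = t" using tb by (auto simp: in_set_conv_nth)
  show ?thesis unfolding winner_def wins_def
  proof (intro exI[of _ bt] conjI allI impI bt)
    show "run (own rs bs (length xs)) (\<lambda>i. St n xs rs i (v i)) (length rs * length xs + length bs * length xs) [] !
      (length rs * length xs + bt * length xs + j) = 1"
      using truth_buyer[OF bt(1) jm] ht bt by simp
  next
    fix bi' assume "bi' < bt"
    then have b1: "bi' < length bs" "bs ! bi' \<noteq> t" using bt dbs by (auto simp: nth_eq_iff_index_eq)
    then have "lexl (kf v xs j (bs ! bi')) (fold lmax (map (kf v xs j) rs) (0, - int n))"
      using hb nth_mem[OF b1(1)] by blast
    then show "run (own rs bs (length xs)) (\<lambda>i. St n xs rs i (v i)) (length rs * length xs + length bs * length xs) [] !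
      (length rs * length xs + bi' * length xs + j) \<noteq> 1"
      using truth_buyer[OF b1(1) jm] by (auto dest: lexl_asym)
  qed
qed

lemma kf_inj: "kf v xs j a = kf v xs j b \<Longrightarrow> a = b" unfolding kf_def by simp

definition Ev :: "nat \<Rightarrow> (nat \<Rightarrow> 'm \<Rightarrow> real) \<Rightarrow> 'm list \<Rightarrow> nat \<Rightarrow> nat \<Rightarrow> nat set \<Rightarrow> bool" where
  "Ev n v xs j t R \<longleftrightarrow> t \<notin> R \<and> (\<forall>b<n. b \<notin> R \<longrightarrow> b \<noteq> t \<longrightarrow> (\<exists>r\<in>R. lexl (kf v xs j b) (kf v xs j r)))"

lemma Ev_win:
  assumes R: "R \<subseteq> {..<n}" and jm: "j < length xs" and tn: "t < n"
    and tmax: "\<forall>i<n. \<not> lexl (kf v xs j t) (kf v xs j i)"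
    and vnn: "0 \<le> v t (xs ! j)" and E: "Ev n v xs j t R"
  shows "winner (sorted_list_of_set R) (sorted_list_of_set ({..<n} - R)) (length xs)
     (run (own (sorted_list_of_set R) (sorted_list_of_set ({..<n} - R)) (length xs))
        (\<lambda>i. St n xs (sorted_list_of_set R) i (v i))
        (length (sorted_list_of_set R) * length xs + length (sorted_list_of_set ({..<n} - R)) * length xs) []) t j"
proof -
  define rs where "rs = sorted_list_of_set R"
  define bs where "bs = sorted_list_of_set ({..<n} - R)"
  have fR: "finite R" using R finite_subset by blast
  have srs: "set rs = R" unfolding rs_def using fR by simp
  have sbs: "set bs = {..<n} - R" unfolding bs_def by simp
  have dbs: "distinct bs" unfolding bs_def by simp
  define Q where "Q = fold lmax (map (kf v xs j) rs) (0, - int n)"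
  from fold_lmax[of "map (kf v xs j) rs" "(0, - int n)"]
  have Q1: "Q \<in> insert (0, - int n) (kf v xs j ` R)" and Q2: "\<forall>y\<in>insert (0, - int n) (kf v xs j ` R). \<not> lexl Q y"
    unfolding Q_def[symmetric] srs[symmetric] by auto
  have ht: "lexl Q (kf v xs j t)"
  proof (cases "Q = (0, - int n)")
    case True then show ?thesis using vnn tn unfolding lexl_def kf_def by auto
  next
    case False
    then obtain r where r: "r \<in> R" "Q = kf v xs j r" using Q1 by auto
    then have "r \<noteq> t" "r < n" using E R unfolding Ev_def by auto
    then have "kf v xs j t \<noteq> kf v xs j r" by (auto dest: kf_inj)
    then show ?thesis using tmax \<open>r < n\<close> r lexl_total by blast
  qed
  have hb: "\<forall>b\<in>set bs. b \<noteq> t \<longrightarrow> lexl (kf v xs j b) Q"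
  proof (intro ballI impI)
    fix b assume "b \<in> set bs" "b \<noteq> t"
    then obtain r where "r \<in> R" "lexl (kf v xs j b) (kf v xs j r)" using E sbs unfolding Ev_def by auto
    then show "lexl (kf v xs j b) Q" using Q2 lexl_le_trans by blast
  qed
  have tb: "t \<in> set bs" using E tn sbs unfolding Ev_def by auto
  show ?thesis using win_event[OF dbs jm tb hb[unfolded Q_def] ht[unfolded Q_def]]
    unfolding rs_def bs_def .
qed


lemma count_Ev:
  assumes tn: "t < n" and tmax: "\<forall>i<n. \<not> lexl (kf v xs j t) (kf v xs j i)"
  shows "2 ^ n \<le> 4 * card {R \<in> Pow {..<n}. Ev n v xs j t R}"
proof (cases "n = 1")
  case True
  then have "{} \<in> {R \<in> Pow {..<n}. Ev n v xs j t R}" using tn unfolding Ev_def by auto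
  moreover have "finite {R \<in> Pow {..<n}. Ev n v xs j t R}" by simp
  ultimately have "0 < card {R \<in> Pow {..<n}. Ev n v xs j t R}" by (auto simp: card_gt_0_iff)
  then have "1 \<le> card {R \<in> Pow {..<n}. Ev n v xs j t R}" by simp
  then show ?thesis using True by simp
next
  case False
  then have n2: "2 \<le> n" using tn by simp
  have "(if t = 0 then 1 else 0) \<in> {..<n} - {t}" using n2 tn by auto
  then have "finite ({..<n} - {t})" "{..<n} - {t} \<noteq> {}" by auto
  from exists_max[OF this, of "kf v xs j"] obtain s where s: "s < n" "s \<noteq> t"
    "\<forall>i<n. i \<noteq> t \<longrightarrow> \<not> lexl (kf v xs j s) (kf v xs j i)" by auto
  define U where "U = {..<n} - {s, t}"
  have cU: "card U = n - 2" unfolding U_def using s tn by (simp add: card_Diff_subset)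
  have sub: "insert s ` Pow U \<subseteq> {R \<in> Pow {..<n}. Ev n v xs j t R}"
  proof
    fix R assume "R \<in> insert s ` Pow U"
    then obtain R' where R': "R' \<subseteq> U" "R = insert s R'" by auto
    have "Ev n v xs j t R" unfolding Ev_def
    proof (intro conjI allI impI)
      show "t \<notin> R" using R' s unfolding U_def by auto
    next
      fix b assume b: "b < n" "b \<notin> R" "b \<noteq> t"
      then have "b \<noteq> s" using R' by auto
      then have "kf v xs j b \<noteq> kf v xs j s" by (auto dest: kf_inj)
      then have "lexl (kf v xs j b) (kf v xs j s)" using s b lexl_total by blast
      then show "\<exists>r\<in>R. lexl (kf v xs j b) (kf v xs j r)" using R' by auto
    qed
    then show "R \<in> {R \<in> Pow {..<n}. Ev n v xs j t R}" using R' s unfolding U_def by auto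
  qed
  have inj: "inj_on (insert s) (Pow U)" unfolding U_def inj_on_def by blast
  have "card (insert s ` Pow U) = 2 ^ (n - 2)"
    using card_image[OF inj] cU unfolding U_def by (simp add: card_Pow)
  moreover have "card (insert s ` Pow U) \<le> card {R \<in> Pow {..<n}. Ev n v xs j t R}"
    by (rule card_mono[OF _ sub]) simp
  moreover have "(2::nat) ^ n = 4 * 2 ^ (n - 2)"
  proof -
    have "n = (n - 2) + 2" using n2 by simp
    then have "(2::nat) ^ n = 2 ^ (n - 2) * 2 ^ 2" by (metis power_add)
    then show ?thesis by simp
  qed
  ultimately show ?thesis by linarith
qed


lemma sum_Al:
  assumes "distinct xs"
  shows "sum f (Al xs rs bs H i) = (\<Sum>j<length xs. if winner rs bs (length xs) H i j then f (xs ! j) else 0)"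
proof -
  have inj: "inj_on (\<lambda>j. xs ! j) {j. j < length xs \<and> winner rs bs (length xs) H i j}"
    using assms by (auto simp: inj_on_def nth_eq_iff_index_eq)
  have "sum f (Al xs rs bs H i) = (\<Sum>j\<in>{j. j < length xs \<and> winner rs bs (length xs) H i j}. f (xs ! j))"
    unfolding Al_def by (subst sum.reindex[OF inj]) simp
  also have "\<dots> = (\<Sum>j<length xs. if winner rs bs (length xs) H i j then f (xs ! j) else 0)"
    by (subst sum.inter_filter[symmetric]) (auto intro: sum.cong simp: lessThan_def)
  finally show ?thesis .
qed

lemma welfare_R:
  assumes dxs: "distinct xs" and R: "R \<subseteq> {..<n}"
    and tn: "\<forall>j<length xs. t j < n"
    and tmax: "\<forall>j<length xs. \<forall>i<n. \<not> lexl (kf v xs j (t j)) (kf v xs j i)"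
    and vnn: "\<forall>i<n. \<forall>j<length xs. 0 \<le> v i (xs ! j)"
  shows "(\<Sum>j<length xs. if Ev n v xs j (t j) R then v (t j) (xs ! j) else 0)
    \<le> welfare n (Tr n xs (sorted_list_of_set R) (sorted_list_of_set ({..<n} - R)))
          (\<lambda>i. St n xs (sorted_list_of_set R) i) v"
proof -
  define rs where "rs = sorted_list_of_set R"
  define bs where "bs = sorted_list_of_set ({..<n} - R)"
  define H where "H = run (own rs bs (length xs)) (\<lambda>i. St n xs rs i (v i)) (length rs * length xs + length bs * length xs) []"
  define g where "g i j = (if winner rs bs (length xs) H i j then v i (xs ! j) else 0)" for i j
  have W: "welfare n (Tr n xs rs bs) (\<lambda>i. St n xs rs i) v = (\<Sum>i<n. \<Sum>j<length xs. g i j)"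
    unfolding welfare_def Tr_def alloc_mk H_def[symmetric] g_def by (intro sum.cong refl) (rule sum_Al[OF dxs])
  also have "\<dots> = (\<Sum>j<length xs. \<Sum>i<n. g i j)" by (rule sum.swap)
  finally have W2: "welfare n (Tr n xs rs bs) (\<lambda>i. St n xs rs i) v = (\<Sum>j<length xs. \<Sum>i<n. g i j)" .
  have "(if Ev n v xs j (t j) R then v (t j) (xs ! j) else 0) \<le> (\<Sum>i<n. g i j)" if jm: "j < length xs" for j
  proof -
    have gnn: "\<forall>i\<in>{..<n}. 0 \<le> g i j" using vnn jm unfolding g_def by auto
    have "g (t j) j \<le> (\<Sum>i<n. g i j)" by (rule member_le_sum) (use gnn tn jm in auto)
    moreover have "Ev n v xs j (t j) R \<Longrightarrow> g (t j) j = v (t j) (xs ! j)"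
      using Ev_win[OF R jm, of "t j" v] tn tmax vnn jm unfolding g_def H_def rs_def bs_def by auto
    ultimately show ?thesis using gnn by (auto intro: sum_nonneg)
  qed
  then show ?thesis unfolding rs_def[symmetric] bs_def[symmetric] W2 by (intro sum_mono) auto
qed

lemma OPT_le:
  assumes sxs: "set xs = M" and dxs: "distinct xs" and va: "\<forall>i<n. v i \<in> additive_vals M"
    and tn: "\<forall>j<length xs. t j < n"
    and tmax: "\<forall>j<length xs. \<forall>i<n. \<not> lexl (kf v xs j (t j)) (kf v xs j i)"
  shows "OPT n M v \<le> (\<Sum>j<length xs. v (t j) (xs ! j))"
  unfolding OPT_def
proof (rule cSup_least)
  have "feasible_alloc n M (\<lambda>_. {})" unfolding feasible_alloc_def by simp
  then show "{\<Sum>i<n. sum (v i) (T i) |T. feasible_alloc n M T} \<noteq> {}" by blast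
next
  fix y assume "y \<in> {\<Sum>i<n. sum (v i) (T i) |T. feasible_alloc n M T}"
  then obtain T where T: "feasible_alloc n M T" and y: "y = (\<Sum>i<n. sum (v i) (T i))" by blast
  have fM: "finite M" using sxs by auto
  have imM: "(\<lambda>j. xs ! j) ` {..<length xs} = M" using sxs by (auto simp: in_set_conv_nth)
  have injx: "inj_on (\<lambda>j. xs ! j) {..<length xs}" using dxs by (auto simp: inj_on_def nth_eq_iff_index_eq)
  have "y = (\<Sum>i<n. \<Sum>x\<in>M. if x \<in> T i then v i x else 0)"
    unfolding y
  proof (rule sum.cong[OF refl])
    fix i assume "i \<in> {..<n}"
    then have "T i \<subseteq> M" using T unfolding feasible_alloc_def by auto
    then have "M \<inter> T i = T i" by auto
    then show "sum (v i) (T i) = (\<Sum>x\<in>M. if x \<in> T i then v i x else 0)"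
      using sum.inter_restrict[OF fM, of "v i" "T i"] by simp
  qed
  also have "\<dots> = (\<Sum>x\<in>M. \<Sum>i<n. if x \<in> T i then v i x else 0)" by (rule sum.swap)
  also have "\<dots> = (\<Sum>j<length xs. \<Sum>i<n. if xs ! j \<in> T i then v i (xs ! j) else 0)"
    unfolding imM[symmetric] by (subst sum.reindex[OF injx]) simp
  also have "\<dots> \<le> (\<Sum>j<length xs. v (t j) (xs ! j))"
  proof (rule sum_mono)
    fix j assume "j \<in> {..<length xs}"
    then have jm: "j < length xs" by simp
    define x where "x = xs ! j"
    have xM: "x \<in> M" using jm sxs unfolding x_def by auto
    have vt: "0 \<le> v (t j) x" using va tn jm xM unfolding additive_vals_def by auto
    have "(\<Sum>i<n. if x \<in> T i then v i x else 0) \<le> v (t j) x"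
    proof (cases "\<exists>i0<n. x \<in> T i0")
      case True
      then obtain i0 where i0: "i0 < n" "x \<in> T i0" by blast
      have "(\<Sum>i<n. if x \<in> T i then v i x else 0) = (\<Sum>i<n. if i = i0 then v i0 x else 0)"
      proof (rule sum.cong[OF refl])
        fix i assume "i \<in> {..<n}"
        show "(if x \<in> T i then v i x else 0) = (if i = i0 then v i0 x else 0)"
        proof (cases "i = i0")
          case True then show ?thesis using i0 by simp
        next
          case False
          then have "T i \<inter> T i0 = {}" using T i0 \<open>i \<in> {..<n}\<close> unfolding feasible_alloc_def by auto
          then have "x \<notin> T i" using i0 by auto
          then show ?thesis using False by simp
        qed
      qed
      also have "\<dots> = v i0 x" using i0 by simp
      also have "\<dots> \<le> v (t j) x" using tmax jm i0 unfolding kf_def lexl_def x_def by force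
      finally show ?thesis .
    next
      case False
      then have "(\<Sum>i<n. if x \<in> T i then v i x else 0) = 0" by (intro sum.neutral) auto
      then show ?thesis using vt by simp
    qed
    then show "(\<Sum>i<n. if xs ! j \<in> T i then v i (xs ! j) else 0) \<le> v (t j) (xs ! j)"
      unfolding x_def .
  qed
  finally show "y \<le> (\<Sum>j<length xs. v (t j) (xs ! j))" .
qed


theorem theorem4p1:
  fixes M :: "'m set" and n :: nat
  assumes "finite M"
  shows "\<exists>D :: ('m mtree \<times> 'm strategies) measure.
           prob_space D \<and>
           (\<forall>x\<in>space D. osp n M (fst x) (snd x)) \<and>
           (\<forall>v. (\<forall>i<n. v i \<in> additive_vals M) \<longrightarrow>
                (\<lambda>x. welfare n (fst x) (snd x) v) \<in> borel_measurable D \<and>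
                OPT n M v \<le> 4 * (\<integral>x. welfare n (fst x) (snd x) v \<partial>D))"
proof -
  obtain xs where sxs: "set xs = M" and dxs: "distinct xs" using finite_distinct_list[OF assms] by blast
  define P where "P = Pow {..<n}"
  define \<phi> :: "nat set \<Rightarrow> 'm mtree \<times> 'm strategies" where
    "\<phi> R = (Tr n xs (sorted_list_of_set R) (sorted_list_of_set ({..<n} - R)), \<lambda>i. St n xs (sorted_list_of_set R) i)" for R
  define D where "D = distr (uniform_count_measure P) (count_space (\<phi> ` P)) \<phi>"
  have fP: "finite P" "P \<noteq> {}" unfolding P_def by auto
  have cP: "card P = 2 ^ n" unfolding P_def by (simp add: card_Pow)
  have meas: "\<phi> \<in> measurable (uniform_count_measure P) (count_space (\<phi> ` P))"
    by (subst measurable_cong_sets[OF sets_uniform_count_measure_count_space refl]) auto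
  have ps: "prob_space D" unfolding D_def
    by (rule prob_space.prob_space_distr[OF prob_space_uniform_count_measure[OF fP] meas])
  have spD: "space D = \<phi> ` P" unfolding D_def by simp
  have setsD: "sets D = sets (count_space (\<phi> ` P))" unfolding D_def by simp
  have ospD: "\<forall>x\<in>space D. osp n M (fst x) (snd x)"
  proof
    fix x assume "x \<in> space D"
    then obtain R where R: "R \<in> P" "x = \<phi> R" using spD by auto
    then have Rn: "R \<subseteq> {..<n}" unfolding P_def by auto
    then have fR: "finite R" using finite_subset by blast
    show "osp n M (fst x) (snd x)" unfolding R \<phi>_def fst_conv snd_conv
      by (rule osp_Tr[OF dxs sxs]) (use fR Rn in auto)
  qed
  have main: "(\<lambda>x. welfare n (fst x) (snd x) v) \<in> borel_measurable D \<and>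
                OPT n M v \<le> 4 * (\<integral>x. welfare n (fst x) (snd x) v \<partial>D)"
    if va: "\<forall>i<n. v i \<in> additive_vals M" for v
  proof
    show "(\<lambda>x. welfare n (fst x) (snd x) v) \<in> borel_measurable D"
      by (subst measurable_cong_sets[OF setsD refl]) (rule borel_measurable_count_space)
    define W where "W R = welfare n (fst (\<phi> R)) (snd (\<phi> R)) v" for R
    have int: "(\<integral>x. welfare n (fst x) (snd x) v \<partial>D) = (\<Sum>R\<in>P. W R) / 2 ^ n"
      unfolding D_def W_def
      by (subst integral_distr[OF meas borel_measurable_count_space])
         (simp add: integral_uniform_count_measure[OF fP(1)] cP)
    show "OPT n M v \<le> 4 * (\<integral>x. welfare n (fst x) (snd x) v \<partial>D)"
    proof (cases "n = 0")
      case True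
      have "{\<Sum>i<n. sum (v i) (T i) |T. feasible_alloc n M T} = {0}"
        using True by (auto simp: feasible_alloc_def)
      then have "OPT n M v = 0" unfolding OPT_def by simp
      moreover have "W R = 0" for R unfolding W_def welfare_def using True by simp
      ultimately show ?thesis unfolding int by simp
    next
      case False
      define m where "m = length xs"
      have ex: "\<exists>t. t < n \<and> (\<forall>i<n. \<not> lexl (kf v xs j t) (kf v xs j i))" for j
        using exists_max[of "{..<n}" "kf v xs j"] False by auto
      define t where "t j = (SOME t. t < n \<and> (\<forall>i<n. \<not> lexl (kf v xs j t) (kf v xs j i)))" for j
      have t: "t j < n \<and> (\<forall>i<n. \<not> lexl (kf v xs j (t j)) (kf v xs j i))" for j
        unfolding t_def by (rule someI_ex[OF ex])
      have vnn: "\<forall>i<n. \<forall>j<length xs. 0 \<le> v i (xs ! j)"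
        using va sxs unfolding additive_vals_def by auto
      define c where "c j = v (t j) (xs ! j)" for j
      have cnn: "0 \<le> c j" if "j < m" for j using vnn t that unfolding c_def m_def by auto
      have opt: "OPT n M v \<le> (\<Sum>j<m. c j)"
        unfolding c_def m_def by (rule OPT_le[OF sxs dxs va]) (use t in auto)
      have WR: "(\<Sum>j<m. if Ev n v xs j (t j) R then c j else 0) \<le> W R" if "R \<in> P" for R
        unfolding W_def \<phi>_def fst_conv snd_conv c_def m_def
        by (rule welfare_R[OF dxs]) (use that t vnn in \<open>auto simp: P_def\<close>)
      have cnt: "c j * 2 ^ n / 4 \<le> (\<Sum>R\<in>P. if Ev n v xs j (t j) R then c j else 0)" if "j < m" for j
      proof -
        have "(\<Sum>R\<in>P. if Ev n v xs j (t j) R then c j else 0) = (\<Sum>R\<in>{R \<in> P. Ev n v xs j (t j) R}. c j)"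
          by (subst sum.inter_filter[OF fP(1), symmetric]) simp
        also have "\<dots> = c j * card {R \<in> P. Ev n v xs j (t j) R}" by simp
        finally have eq: "(\<Sum>R\<in>P. if Ev n v xs j (t j) R then c j else 0) = c j * card {R \<in> P. Ev n v xs j (t j) R}" .
        have "(2::real) ^ n \<le> 4 * real (card {R \<in> P. Ev n v xs j (t j) R})"
          using count_Ev[of "t j" n v xs j] t unfolding P_def
          by (metis (mono_tags, lifting) numeral_power_le_of_nat_cancel_iff of_nat_mult of_nat_numeral)
        then show ?thesis unfolding eq using cnn[OF that]
          by (metis (no_types, lifting) divide_le_eq_numeral1(1) mult.assoc mult.commute mult_left_mono zero_less_numeral)
      qed
      have "(\<Sum>j<m. c j) * 2 ^ n / 4 = (\<Sum>j<m. c j * 2 ^ n / 4)"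
        by (simp add: sum_distrib_right sum_divide_distrib)
      also have "\<dots> \<le> (\<Sum>j<m. \<Sum>R\<in>P. if Ev n v xs j (t j) R then c j else 0)"
        by (rule sum_mono) (use cnt in auto)
      also have "\<dots> = (\<Sum>R\<in>P. \<Sum>j<m. if Ev n v xs j (t j) R then c j else 0)" by (rule sum.swap)
      also have "\<dots> \<le> (\<Sum>R\<in>P. W R)" by (rule sum_mono) (rule WR)
      finally have "(\<Sum>j<m. c j) * 2 ^ n / 4 \<le> (\<Sum>R\<in>P. W R)" .
      then have "(\<Sum>j<m. c j) \<le> 4 * ((\<Sum>R\<in>P. W R) / 2 ^ n)"
        by (simp add: field_simps)
      then show ?thesis unfolding int using opt by linarith
    qed
  qed
  show ?thesis using ps ospD main by blast
qed

end
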